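(* Let $\mathcal{U}$ be a uniformity on a set $G$ generating the topology $\tau_{\mathcal{U}}$, and assume the topological space $(G,\tau_{\mathcal{U}})$ has the Hurewicz property. Then $(G,\tau_{\mathcal{U}})$ satisfies ${\sf S}_c(\mathcal{O}_{\mathcal{U}},\mathcal{O})$ if and only if it satisfies ${\sf S}_c(\mathcal{O},\mathcal{O})$.
   Context: For $V\subseteq G\times G$ and $x\in G$, $V(x)=\{y\in G:(x,y)\in V\}$. $\mathcal{O}_{\mathcal{U}}=\{\{V(x):x\in G\}: V\in\mathcal{U}\}$ is the collection of uniform covers (with respect to $\mathcal{U}$). $\mathcal{O}$ is the collection of all open covers of $(G,\tau_{\mathcal{U}})$. A family $\mathcal{B}$ refines $\mathcal{A}$ if every member of $\mathcal{B}$ is contained in some member of $\mathcal{A}$. ${\sf S}_c(\mathcal{A},\mathcal{B})$: for each sequence $(A_n:n<\infty)$ of elements of $\mathcal{A}$ there is a sequence $(B_n:n<\infty)$ such that each $B_n$ is a pairwise disjoint family of open sets refining $A_n$ and $\bigcup_nB_n\in\mathcal{B}$. A space $X$ has the Hurewicz property if for each sequence $(\mathcal{U}_n:n<\infty)$ of open covers of $X$ there are finite $\mathcal{F}_n\subseteq\mathcal{U}_n$ such that for each $x\in X$ the set $\{n:x\notin\bigcup\mathcal{F}_n\}$ is finite. *)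

theory Defs
  imports "HOL-Analysis.Analysis"
begin

definition uniformity_on :: "'a set \<Rightarrow> ('a \<times> 'a) set set \<Rightarrow> bool" where
  "uniformity_on G U \<longleftrightarrow>
     U \<noteq> {} \<and>
     (\<forall>V\<in>U. V \<subseteq> G \<times> G \<and> Id_on G \<subseteq> V) \<and>
     (\<forall>V W. V \<in> U \<and> V \<subseteq> W \<and> W \<subseteq> G \<times> G \<longrightarrow> W \<in> U) \<and>
     (\<forall>V\<in>U. \<forall>W\<in>U. V \<inter> W \<in> U) \<and>
     (\<forall>V\<in>U. V\<inverse> \<in> U) \<and>
     (\<forall>V\<in>U. \<exists>W\<in>U. W O W \<subseteq> V)"

definition utop :: "'a set \<Rightarrow> ('a \<times> 'a) set set \<Rightarrow> 'a topology" where
  "utop G U = topology (\<lambda>S. S \<subseteq> G \<and> (\<forall>x\<in>S. \<exists>V\<in>U. V `` {x} \<subseteq> S))"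

definition uniform_covers :: "'a set \<Rightarrow> ('a \<times> 'a) set set \<Rightarrow> 'a set set set" where
  "uniform_covers G U = {(\<lambda>x. V `` {x}) ` G | V. V \<in> U}"

definition open_covers :: "'a topology \<Rightarrow> 'a set set set" where
  "open_covers X = {C. (\<forall>c\<in>C. openin X c) \<and> \<Union>C = topspace X}"

definition refines :: "'a set set \<Rightarrow> 'a set set \<Rightarrow> bool" where
  "refines B A \<longleftrightarrow> (\<forall>b\<in>B. \<exists>a\<in>A. b \<subseteq> a)"

definition S_c :: "'a topology \<Rightarrow> 'a set set set \<Rightarrow> 'a set set set \<Rightarrow> bool" where
  "S_c X \<A> \<B> \<longleftrightarrow>
     (\<forall>A. (\<forall>n::nat. A n \<in> \<A>) \<longrightarrow>
        (\<exists>B. (\<forall>n. disjoint (B n) \<and> (\<forall>b\<in>B n. openin X b) \<and> refines (B n) (A n))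
             \<and> (\<Union>n. B n) \<in> \<B>))"

definition hurewicz :: "'a topology \<Rightarrow> bool" where
  "hurewicz X \<longleftrightarrow>
     (\<forall>\<U>. (\<forall>n::nat. \<U> n \<in> open_covers X) \<longrightarrow>
        (\<exists>F. (\<forall>n. finite (F n) \<and> F n \<subseteq> \<U> n) \<and>
             (\<forall>x\<in>topspace X. finite {n. x \<notin> \<Union>(F n)})))"

end

theory Submission
  imports Defs "HOL-Library.Nat_Bijection"
begin

lemma u_ne: "uniformity_on G U \<Longrightarrow> \<exists>V. V \<in> U"
  by (drule iffD1[OF uniformity_on_def], drule conjunct1) (simp add: ex_in_conv)
lemma u_sub2: "uniformity_on G U \<Longrightarrow> V \<in> U \<Longrightarrow> V \<subseteq> G \<times> G \<and> Id_on G \<subseteq> V"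
  by (drule iffD1[OF uniformity_on_def], drule conjunct2, drule conjunct1) (erule bspec)
lemma u_sub: "uniformity_on G U \<Longrightarrow> V \<in> U \<Longrightarrow> V \<subseteq> G \<times> G"
  by (drule (1) u_sub2) (erule conjunct1)
lemma u_id: "uniformity_on G U \<Longrightarrow> V \<in> U \<Longrightarrow> x \<in> G \<Longrightarrow> (x,x) \<in> V"
  by (drule (1) u_sub2, drule conjunct2) (erule subsetD, rule Id_onI)
lemma u_up: "uniformity_on G U \<Longrightarrow> V \<in> U \<Longrightarrow> V \<subseteq> W \<Longrightarrow> W \<subseteq> G \<times> G \<Longrightarrow> W \<in> U"
  apply (drule iffD1[OF uniformity_on_def], drule conjunct2, drule conjunct2, drule conjunct1)
  apply (drule spec[of _ V], drule spec[of _ W])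
  apply (erule mp)
  apply (intro conjI; assumption)
  done
lemma u_int: "uniformity_on G U \<Longrightarrow> V \<in> U \<Longrightarrow> W \<in> U \<Longrightarrow> V \<inter> W \<in> U"
  apply (drule iffD1[OF uniformity_on_def], drule conjunct2, drule conjunct2, drule conjunct2, drule conjunct1)
  apply (drule (1) bspec, erule (1) bspec)
  done
lemma u_inv: "uniformity_on G U \<Longrightarrow> V \<in> U \<Longrightarrow> V\<inverse> \<in> U"
  apply (drule iffD1[OF uniformity_on_def], drule conjunct2, drule conjunct2, drule conjunct2, drule conjunct2, drule conjunct1)
  apply (erule (1) bspec)
  done
lemma u_comp: "uniformity_on G U \<Longrightarrow> V \<in> U \<Longrightarrow> \<exists>W\<in>U. W O W \<subseteq> V"
  apply (drule iffD1[OF uniformity_on_def], drule conjunct2, drule conjunct2, drule conjunct2, drule conjunct2, drule conjunct2)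
  apply (erule (1) bspec)
  done

lemma istop1:
  assumes "uniformity_on G U"
  shows "\<forall>S T. S \<subseteq> G \<and> (\<forall>x\<in>S. \<exists>V\<in>U. V `` {x} \<subseteq> S) \<longrightarrow> T \<subseteq> G \<and> (\<forall>x\<in>T. \<exists>V\<in>U. V `` {x} \<subseteq> T) \<longrightarrow> S \<inter> T \<subseteq> G \<and> (\<forall>x\<in>S \<inter> T. \<exists>V\<in>U. V `` {x} \<subseteq> S \<inter> T)"
proof (intro allI impI)
  fix S T assume S: "S \<subseteq> G \<and> (\<forall>x\<in>S. \<exists>V\<in>U. V `` {x} \<subseteq> S)"
    and T: "T \<subseteq> G \<and> (\<forall>x\<in>T. \<exists>V\<in>U. V `` {x} \<subseteq> T)"
  have SG: "S \<subseteq> G" using S by (rule conjunct1)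
  have S2: "\<forall>x\<in>S. \<exists>V\<in>U. V `` {x} \<subseteq> S" using S by (rule conjunct2)
  have T2: "\<forall>x\<in>T. \<exists>V\<in>U. V `` {x} \<subseteq> T" using T by (rule conjunct2)
  have "\<exists>V\<in>U. V `` {x} \<subseteq> S \<inter> T" if x: "x \<in> S \<inter> T" for x
  proof -
    have "x \<in> S" "x \<in> T" using x by simp_all
    then obtain V W where V: "V \<in> U" "V``{x} \<subseteq> S" and W: "W \<in> U" "W``{x} \<subseteq> T"
      using S2 T2 by meson
    have "V \<inter> W \<in> U" using u_int[OF assms V(1) W(1)] .
    moreover have "(V \<inter> W) `` {x} \<subseteq> V``{x}" "(V \<inter> W) `` {x} \<subseteq> W``{x}" by (rule Image_mono; simp)+
    then have "(V \<inter> W) `` {x} \<subseteq> S \<inter> T" using V(2) W(2) by (meson le_inf_iff order_trans)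
    ultimately show ?thesis by (rule bexI[rotated])
  qed
  then show "S \<inter> T \<subseteq> G \<and> (\<forall>x\<in>S \<inter> T. \<exists>V\<in>U. V `` {x} \<subseteq> S \<inter> T)" using SG by auto
qed

lemma istop2:
  shows "\<forall>K. (\<forall>k\<in>K. k \<subseteq> G \<and> (\<forall>x\<in>k. \<exists>V\<in>U. V `` {x} \<subseteq> k)) \<longrightarrow> \<Union>K \<subseteq> G \<and> (\<forall>x\<in>\<Union>K. \<exists>V\<in>U. V `` {x} \<subseteq> \<Union>K)"
proof (intro allI impI)
  fix K assume K: "\<forall>k\<in>K. k \<subseteq> G \<and> (\<forall>x\<in>k. \<exists>V\<in>U. V `` {x} \<subseteq> k)"
  have "\<exists>V\<in>U. V `` {x} \<subseteq> \<Union>K" if x: "x \<in> \<Union>K" for x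
  proof -
    from x obtain k where k: "k \<in> K" "x \<in> k" by blast
    from K k(1) have "\<forall>y\<in>k. \<exists>V\<in>U. V``{y} \<subseteq> k" by blast
    with k(2) obtain V where "V \<in> U" "V``{x} \<subseteq> k" by blast
    with k show ?thesis by blast
  qed
  moreover have "\<Union>K \<subseteq> G" using K by blast
  ultimately show "\<Union>K \<subseteq> G \<and> (\<forall>x\<in>\<Union>K. \<exists>V\<in>U. V `` {x} \<subseteq> \<Union>K)" by blast
qed

lemma unif_istop:
  assumes "uniformity_on G U"
  shows "istopology (\<lambda>S. S \<subseteq> G \<and> (\<forall>x\<in>S. \<exists>V\<in>U. V `` {x} \<subseteq> S))"
  unfolding istopology_def using istop1[OF assms] istop2[of G U] by simp

lemma openin_utop:
  assumes "uniformity_on G U"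
  shows "openin (utop G U) S \<longleftrightarrow> S \<subseteq> G \<and> (\<forall>x\<in>S. \<exists>V\<in>U. V `` {x} \<subseteq> S)"
  using unif_istop[OF assms] unfolding utop_def by simp

lemma topspace_utop:
  assumes "uniformity_on G U"
  shows "topspace (utop G U) = G"
proof -
  obtain V where V: "V \<in> U" using u_ne[OF assms] by blast
  have "V \<subseteq> G \<times> G" using u_sub[OF assms V] .
  then have "openin (utop G U) G" using V by (auto simp: openin_utop[OF assms])
  moreover have "\<And>S. openin (utop G U) S \<Longrightarrow> S \<subseteq> G" by (simp add: openin_utop[OF assms])
  ultimately show ?thesis unfolding topspace_def by blast
qed

definition nb :: "'a set \<Rightarrow> ('a \<times> 'a) set set \<Rightarrow> ('a \<times> 'a) set \<Rightarrow> 'a \<Rightarrow> 'a set" where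
  "nb G U V x = {z\<in>G. \<exists>W\<in>U. W``{z} \<subseteq> V``{x}}"

lemma nb_iff: "z \<in> nb G U V x \<longleftrightarrow> z \<in> G \<and> (\<exists>W\<in>U. W``{z} \<subseteq> V``{x})"
  unfolding nb_def by (rule mem_Collect_eq)

lemma nb_sub: "nb G U V x \<subseteq> G"
  unfolding nb_def by (rule Collect_subset)

lemma nb_open:
  assumes u: "uniformity_on G U"
  shows "openin (utop G U) (nb G U V x)"
  unfolding openin_utop[OF u]
proof (rule conjI[OF nb_sub], rule ballI)
  fix z assume "z \<in> nb G U V x"
  then have "z \<in> G \<and> (\<exists>W\<in>U. W``{z} \<subseteq> V``{x})" by (simp only: nb_iff)
  then obtain W where W: "W \<in> U" "W``{z} \<subseteq> V``{x}" by (elim conjE bexE)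
  obtain W' where W': "W' \<in> U" "W' O W' \<subseteq> W" using u_comp[OF u W(1)] by (elim bexE)
  have W'G: "W' \<subseteq> G \<times> G" using u_sub[OF u W'(1)] .
  have "W'``{z} \<subseteq> nb G U V x"
  proof
    fix w assume w: "w \<in> W'``{z}"
    then have zw: "(z,w) \<in> W'" by simp
    then have "(z,w) \<in> G \<times> G" by (rule subsetD[OF W'G])
    then have wG: "w \<in> G" by simp
    have "W'``{w} \<subseteq> V``{x}"
    proof
      fix y assume "y \<in> W'``{w}"
      then have wy: "(w,y) \<in> W'" by simp
      from zw wy have "(z,y) \<in> W' O W'" by (rule relcompI)
      then have "(z,y) \<in> W" by (rule subsetD[OF W'(2)])
      then have "y \<in> W``{z}" by simp
      then show "y \<in> V``{x}" by (rule subsetD[OF W(2)])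
    qed
    with W'(1) have "\<exists>W\<in>U. W``{w} \<subseteq> V``{x}" by (rule bexI[rotated])
    with wG show "w \<in> nb G U V x" by (simp only: nb_iff)
  qed
  then show "\<exists>E\<in>U. E `` {z} \<subseteq> nb G U V x" using W'(1) by (intro bexI[of _ W'])
qed

lemma nb_self:
  assumes V: "V \<in> U" and x: "x \<in> G"
  shows "x \<in> nb G U V x"
proof -
  have "\<exists>W\<in>U. W``{x} \<subseteq> V``{x}" using V by (rule bexI[rotated]) (rule order_refl)
  with x show ?thesis by (simp only: nb_iff)
qed

lemma nb_in:
  assumes u: "uniformity_on G U"
  shows "nb G U V x \<subseteq> V``{x}"
proof
  fix z assume "z \<in> nb G U V x"
  then have "z \<in> G \<and> (\<exists>W\<in>U. W``{z} \<subseteq> V``{x})" by (simp only: nb_iff)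
  then obtain W where W: "z \<in> G" "W \<in> U" "W``{z} \<subseteq> V``{x}" by (elim conjE bexE)
  have "(z,z) \<in> W" using u_id[OF u W(2) W(1)] .
  then have "z \<in> W``{z}" by simp
  then show "z \<in> V``{x}" by (rule subsetD[OF W(3)])
qed

lemma nb_props:
  assumes u: "uniformity_on G U" and V: "V \<in> U" and x: "x \<in> G"
  shows "openin (utop G U) (nb G U V x)" "x \<in> nb G U V x" "nb G U V x \<subseteq> V``{x}"
  using nb_open[OF u] nb_self[OF V x] nb_in[OF u] by blast+

lemma three_ent:
  assumes u: "uniformity_on G U" and E: "E \<in> U"
  shows "\<exists>V\<in>U. V O V\<inverse> O V \<subseteq> E"
proof -
  obtain T where T: "T \<in> U" "T O T \<subseteq> E" using u_comp[OF u E] by blast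
  obtain S where S: "S \<in> U" "S O S \<subseteq> T" using u_comp[OF u T(1)] by blast
  have S': "S \<inter> T \<in> U" using u_int[OF u S(1) T(1)] .
  have S'': "(S \<inter> T)\<inverse> \<in> U" using u_inv[OF u S'] .
  define R where "R = (S \<inter> T) \<inter> (S \<inter> T)\<inverse>"
  have V: "R \<in> U" unfolding R_def using u_int[OF u S' S''] .
  have R1: "R \<subseteq> T" "R \<subseteq> S" "R\<inverse> \<subseteq> S" unfolding R_def by auto
  have "R\<inverse> O R \<subseteq> S O S" using R1(3) R1(2) by (rule relcomp_mono)
  then have "R\<inverse> O R \<subseteq> T" using S(2) by (rule order_trans)
  then have "R O R\<inverse> O R \<subseteq> T O T" using R1(1) by (intro relcomp_mono)
  then have "R O R\<inverse> O R \<subseteq> E" using T(2) by (rule order_trans)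
  then show ?thesis using V by blast
qed

lemma finite_inter_ent:
  assumes u: "uniformity_on G U" and "finite P" and "\<forall>p\<in>P. f p \<in> U"
  shows "(G \<times> G) \<inter> \<Inter>(f ` P) \<in> U"
  using assms(2,3)
proof (induction P rule: finite_induct)
  case empty
  obtain V where V: "V \<in> U" using u_ne[OF u] by blast
  then have "V \<subseteq> G \<times> G" using u_sub[OF u] by blast
  then have "G \<times> G \<in> U" using u_up[OF u V] by simp
  then show ?case by simp
next
  case (insert p P)
  have fp: "f p \<in> U" using insert.prems by simp
  have IH: "(G \<times> G) \<inter> \<Inter>(f ` P) \<in> U" using insert.IH insert.prems by simp
  have "f p \<inter> ((G \<times> G) \<inter> \<Inter>(f ` P)) \<in> U" using u_int[OF u fp IH] .
  moreover have "f p \<inter> ((G \<times> G) \<inter> \<Inter>(f ` P)) = (G \<times> G) \<inter> \<Inter>(f ` insert p P)" by auto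
  ultimately show ?case by simp
qed

lemma oc_iff: "C \<in> open_covers X \<longleftrightarrow> (\<forall>c\<in>C. openin X c) \<and> \<Union>C = topspace X"
  unfolding open_covers_def by (rule mem_Collect_eq)

lemma dir2:
  assumes u: "uniformity_on G U"
    and SO: "S_c (utop G U) (open_covers (utop G U)) (open_covers (utop G U))"
  shows "S_c (utop G U) (uniform_covers G U) (open_covers (utop G U))"
  unfolding S_c_def
proof (intro allI impI)
  note ts = topspace_utop[OF u]
  fix A assume A: "\<forall>n::nat. A n \<in> uniform_covers G U"
  have "\<forall>n. \<exists>V. V \<in> U \<and> A n = (\<lambda>x. V `` {x}) ` G"
  proof
    fix n
    have "A n \<in> {(\<lambda>x. V `` {x}) ` G | V. V \<in> U}" using A unfolding uniform_covers_def by simp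
    then show "\<exists>V. V \<in> U \<and> A n = (\<lambda>x. V `` {x}) ` G" by (simp add: conj_commute)
  qed
  then obtain Vf where Vf: "\<And>n. Vf n \<in> U" "\<And>n. A n = (\<lambda>x. Vf n `` {x}) ` G"
    by metis
  define C where "C n = (\<lambda>x. nb G U (Vf n) x) ` G" for n
  have C: "C n \<in> open_covers (utop G U)" for n
  proof -
    have "\<forall>c\<in>C n. openin (utop G U) c" unfolding C_def using nb_open[OF u] by simp
    moreover have "\<Union>(C n) \<subseteq> G" unfolding C_def using nb_sub by fast
    moreover have "G \<subseteq> \<Union>(C n)" unfolding C_def using nb_self[OF Vf(1)] by fast
    ultimately show ?thesis unfolding oc_iff ts by (intro conjI) auto
  qed
  have "\<exists>B. (\<forall>n. disjoint (B n) \<and> (\<forall>b\<in>B n. openin (utop G U) b) \<and> refines (B n) (C n))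
        \<and> (\<Union>n. B n) \<in> open_covers (utop G U)"
    using SO C unfolding S_c_def by simp
  then obtain B where B: "\<And>n. disjoint (B n) \<and> (\<forall>b\<in>B n. openin (utop G U) b) \<and> refines (B n) (C n)"
      "(\<Union>n. B n) \<in> open_covers (utop G U)"
    by metis
  have "refines (B n) (A n)" for n
    unfolding refines_def
  proof
    fix b assume "b \<in> B n"
    then obtain c where c: "c \<in> C n" "b \<subseteq> c" using B(1)[of n] unfolding refines_def by blast
    then obtain x where x: "x \<in> G" "c = nb G U (Vf n) x" unfolding C_def by blast
    have "b \<subseteq> Vf n `` {x}" using c(2) nb_in[OF u] x(2) by (metis order_trans)
    moreover have "Vf n `` {x} \<in> A n" using x(1) Vf(2)[of n] by simp
    ultimately show "\<exists>a\<in>A n. b \<subseteq> a" by (intro bexI[of _ "Vf n `` {x}"])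
  qed
  then show "\<exists>B. (\<forall>n. disjoint (B n) \<and> (\<forall>b\<in>B n. openin (utop G U) b) \<and> refines (B n) (A n))
             \<and> (\<Union>n. B n) \<in> open_covers (utop G U)" using B by (intro exI[of _ B]) simp
qed


lemma dir1:
  assumes u: "uniformity_on G U" and H: "hurewicz (utop G U)"
    and SU: "S_c (utop G U) (uniform_covers G U) (open_covers (utop G U))"
  shows "S_c (utop G U) (open_covers (utop G U)) (open_covers (utop G U))"
  unfolding S_c_def
proof (intro allI impI)
  note ts = topspace_utop[OF u]
  fix A assume A: "\<forall>n::nat. A n \<in> open_covers (utop G U)"
  have ex: "\<exists>V a. V \<in> U \<and> a \<in> A n \<and> (V O V\<inverse> O V)``{x} \<subseteq> a" if x: "x \<in> G" for n x
  proof -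
    have An: "\<forall>c\<in>A n. openin (utop G U) c" "\<Union>(A n) = G" using A unfolding oc_iff ts by simp_all
    then obtain a where a: "a \<in> A n" "x \<in> a" using x by blast
    have "openin (utop G U) a" using An(1) a(1) by simp
    then have "\<forall>y\<in>a. \<exists>E\<in>U. E``{y} \<subseteq> a" unfolding openin_utop[OF u] by simp
    then obtain E where E: "E \<in> U" "E``{x} \<subseteq> a" using a(2) by blast
    obtain V where V: "V \<in> U" "V O V\<inverse> O V \<subseteq> E" using three_ent[OF u E(1)] by blast
    have "(V O V\<inverse> O V)``{x} \<subseteq> E``{x}" using V(2) by (rule Image_mono) simp
    then have "(V O V\<inverse> O V)``{x} \<subseteq> a" using E(2) by (rule order_trans)
    then show ?thesis using V(1) a(1) by blast
  qed
  define Q where "Q n x V a \<longleftrightarrow> V \<in> U \<and> a \<in> A n \<and> (V O V\<inverse> O V)``{x} \<subseteq> a" for n x V a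
  define Vf where "Vf n x = (SOME V. \<exists>a. Q n x V a)" for n x
  define af where "af n x = (SOME a. Q n x (Vf n x) a)" for n x
  have Qx: "Q n x (Vf n x) (af n x)" if x: "x \<in> G" for n x
  proof -
    have "\<exists>V a. Q n x V a" using ex[OF x] unfolding Q_def .
    then have "\<exists>a. Q n x (Vf n x) a" unfolding Vf_def by (rule someI_ex)
    then show ?thesis unfolding af_def by (rule someI_ex)
  qed
  have Vf: "\<And>n x. x \<in> G \<Longrightarrow> Vf n x \<in> U"
     "\<And>n x. x \<in> G \<Longrightarrow> af n x \<in> A n"
     "\<And>n x. x \<in> G \<Longrightarrow> (Vf n x O (Vf n x)\<inverse> O Vf n x)``{x} \<subseteq> af n x"
    using Qx unfolding Q_def by blast+
  define C where "C n = (\<lambda>x. nb G U (Vf n x) x) ` G" for n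
  have C: "C n \<in> open_covers (utop G U)" for n
  proof -
    have "\<forall>c\<in>C n. openin (utop G U) c" unfolding C_def using nb_open[OF u] by simp
    moreover have "\<Union>(C n) \<subseteq> G" unfolding C_def using nb_sub by fast
    moreover have "G \<subseteq> \<Union>(C n)" unfolding C_def using nb_self[OF Vf(1)] by fast
    ultimately show ?thesis unfolding oc_iff ts by (intro conjI) auto
  qed
  have "\<exists>F. (\<forall>n. finite (F n) \<and> F n \<subseteq> C n) \<and> (\<forall>x\<in>G. finite {n. x \<notin> \<Union>(F n)})"
    using H C unfolding hurewicz_def ts by simp
  then obtain F where F: "\<And>n. finite (F n)" "\<And>n. F n \<subseteq> C n"
      "\<And>x. x \<in> G \<Longrightarrow> finite {n. x \<notin> \<Union>(F n)}"
    by metis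
  have "\<exists>P. P \<subseteq> G \<and> finite P \<and> F n = (\<lambda>x. nb G U (Vf n x) x) ` P" for n
    using finite_subset_image[OF F(1)[of n] F(2)[of n, unfolded C_def]] by blast
  then obtain P where P: "\<And>n. P n \<subseteq> G" "\<And>n. finite (P n)" "\<And>n. F n = (\<lambda>x. nb G U (Vf n x) x) ` P n"
    by metis
  define W where "W n = (G \<times> G) \<inter> \<Inter>(Vf n ` P n)" for n
  have WU: "W n \<in> U" for n unfolding W_def
  proof (rule finite_inter_ent[OF u P(2)])
    show "\<forall>p\<in>P n. Vf n p \<in> U" using P(1)[of n] Vf(1) by blast
  qed
  define UC where "UC n = (\<lambda>x. W n `` {x}) ` G" for n
  have UC: "UC n \<in> uniform_covers G U" for n
    unfolding UC_def uniform_covers_def using WU by blast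
  have "\<exists>B. (\<forall>k. disjoint (B k) \<and> (\<forall>b\<in>B k. openin (utop G U) b) \<and> refines (B k) (UC (prod_encode (j,k))))
             \<and> (\<Union>k. B k) \<in> open_covers (utop G U)" for j
    using SU UC unfolding S_c_def by simp
  then obtain Bf where Bf: "\<And>j k. disjoint (Bf j k) \<and> (\<forall>b\<in>Bf j k. openin (utop G U) b) \<and> refines (Bf j k) (UC (prod_encode (j,k)))"
      "\<And>j. (\<Union>k. Bf j k) \<in> open_covers (utop G U)"
    by metis
  define D where "D n = Bf (fst (prod_decode n)) (snd (prod_decode n))" for n
  have D1: "disjoint (D n) \<and> (\<forall>b\<in>D n. openin (utop G U) b) \<and> refines (D n) (UC n)" for n
    using Bf(1)[of "fst (prod_decode n)" "snd (prod_decode n)"] unfolding D_def by simp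
  have D2: "\<exists>k. x \<in> \<Union>(D (prod_encode (j,k)))" if x: "x \<in> G" for x j
  proof -
    have "\<Union>(\<Union>k. Bf j k) = G" using Bf(2)[of j] unfolding oc_iff ts by simp
    then obtain k where "x \<in> \<Union>(Bf j k)" using x by blast
    then show ?thesis unfolding D_def by auto
  qed
  define B where "B n = {b \<in> D n. \<exists>a\<in>A n. b \<subseteq> a}" for n
  have Bsub: "B n \<subseteq> D n" for n unfolding B_def by blast
  have cov: "x \<in> \<Union>(\<Union>n. B n)" if x: "x \<in> G" for x
  proof -
    obtain kf where kf: "\<And>j. x \<in> \<Union>(D (prod_encode (j, kf j)))" using D2[OF x] by metis
    define bad where "bad = {n. x \<notin> \<Union>(F n)}"
    have fb: "finite bad" using F(3)[OF x] unfolding bad_def .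
    have inj: "inj (\<lambda>j. prod_encode (j, kf j))"
    proof (rule injI)
      fix i j assume "prod_encode (i, kf i) = prod_encode (j, kf j)"
      then have "prod_decode (prod_encode (i, kf i)) = prod_decode (prod_encode (j, kf j))" by simp
      then show "i = j" by simp
    qed
    have "\<not> range (\<lambda>j. prod_encode (j, kf j)) \<subseteq> bad"
    proof
      assume "range (\<lambda>j. prod_encode (j, kf j)) \<subseteq> bad"
      then have "finite (range (\<lambda>j. prod_encode (j, kf j)))" using fb by (rule finite_subset)
      then have "finite (UNIV :: nat set)" using inj by (rule finite_imageD)
      then show False by simp
    qed
    then obtain j where j: "prod_encode (j, kf j) \<notin> bad" by (auto simp: image_subset_iff)
    define n where "n = prod_encode (j, kf j)"
    have n: "n \<notin> bad" "x \<in> \<Union>(D n)" using j kf[of j] unfolding n_def by simp_all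
    have "x \<in> \<Union>(F n)" using n(1) unfolding bad_def by simp
    then have "x \<in> (\<Union>q\<in>P n. nb G U (Vf n q) q)" unfolding P(3)[of n] by simp
    then obtain p where p: "p \<in> P n" "x \<in> nb G U (Vf n p) p" by (rule UN_E)
    have pG: "p \<in> G" using P(1)[of n] p(1) by (rule subsetD)
    have "x \<in> Vf n p `` {p}" using nb_in[OF u] p(2) by blast
    then have px: "(p, x) \<in> Vf n p" by simp
    obtain b where b: "b \<in> D n" "x \<in> b" using n(2) by blast
    then obtain c where c: "c \<in> UC n" "b \<subseteq> c" using D1[of n] unfolding refines_def by blast
    then obtain y where y: "y \<in> G" "c = W n `` {y}" unfolding UC_def by blast
    have Wsub: "W n \<subseteq> Vf n p" unfolding W_def using p(1) by blast
    have "b \<subseteq> af n p"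
    proof
      fix z assume z: "z \<in> b"
      have yz: "(y, z) \<in> Vf n p" using z c(2) y(2) Wsub by blast
      have yx: "(y, x) \<in> Vf n p" using b(2) c(2) y(2) Wsub by blast
      have "(x, y) \<in> (Vf n p)\<inverse>" using yx by simp
      then have "(x, z) \<in> (Vf n p)\<inverse> O Vf n p" using yz by (rule relcompI)
      with px have "(p, z) \<in> Vf n p O (Vf n p)\<inverse> O Vf n p" by (rule relcompI)
      then have "z \<in> (Vf n p O (Vf n p)\<inverse> O Vf n p) `` {p}" by simp
      then show "z \<in> af n p" using Vf(3)[OF pG] by blast
    qed
    then have "b \<in> B n" using b(1) Vf(2)[OF pG] unfolding B_def by blast
    then show ?thesis using b(2) by blast
  qed
  show "\<exists>B. (\<forall>n. disjoint (B n) \<and> (\<forall>b\<in>B n. openin (utop G U) b) \<and> refines (B n) (A n))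
           \<and> (\<Union>n. B n) \<in> open_covers (utop G U)"
  proof (intro exI[of _ B] conjI allI)
    fix n
    show "disjoint (B n)" using D1[of n] Bsub[of n] by (meson pairwise_subset)
    show "\<forall>b\<in>B n. openin (utop G U) b" using D1[of n] Bsub[of n] by blast
    show "refines (B n) (A n)" unfolding B_def refines_def by blast
  next
    have op: "\<forall>b\<in>(\<Union>n. B n). openin (utop G U) b" using D1 Bsub by blast
    then have "\<Union>(\<Union>n. B n) \<subseteq> G" unfolding openin_utop[OF u] by blast
    then have "\<Union>(\<Union>n. B n) = G" using cov by blast
    with op show "(\<Union>n. B n) \<in> open_covers (utop G U)" unfolding oc_iff ts by simp
  qed
qed

theorem theorem5p1:
  fixes G :: "'a set" and U :: "('a \<times> 'a) set set"
  assumes "uniformity_on G U"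
    and "hurewicz (utop G U)"
  shows "S_c (utop G U) (uniform_covers G U) (open_covers (utop G U))
     \<longleftrightarrow> S_c (utop G U) (open_covers (utop G U)) (open_covers (utop G U))"
  using dir1[OF assms] dir2[OF assms(1)] by blast

end
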